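(* Let $f$, $u_{0s}$, $c_0$, $b_0$, $p$ be as in the context and assume $\|b_0\|_{L^1(-\infty,0)}<\infty$ and $\sup_{x\le0}|b_0(x)c_0(x)|<\infty$. Then there exists $\Lambda>0$ such that every $\sigma\in\mathbb{C}$ with $\Re(\sigma)>0$ and $\int_{-\infty}^{0}b_0(\xi)e^{-\sigma p(\xi)}\,d\xi=c_0(0)$ satisfies $|\Im(\sigma)|<\Lambda$.
   Context: Let $q>0$ and let $f:(-\infty,0]\times(0,\infty)\to[0,\infty)$ be such that for each $u>0$, $x\mapsto f(x,u)$ is continuous and integrable, $\partial f/\partial u$ exists and is continuous, and $\int_{-\infty}^0 f(x,u)\,dx=q/2$ independently of $u$. Let $u_{0s}=2\sqrt q$. Define $c_0(x)=\sqrt{2\int_{-\infty}^x f(y,u_{0s})\,dy}$ for $x\le0$ (so $c_0(0)=u_{0s}/2>0$), and assume $c_0(x)>0$ for all $x\le0$. Define $b_0(x)=\frac{\partial f}{\partial u}(x,u_{0s})+\frac{f(x,u_{0s})}{2c_0(x)}$ and $p(x)=\int_x^0 dy/c_0(y)$. *)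

theory Defs
  imports "HOL-Analysis.Analysis"
begin

definition u0s :: "real \<Rightarrow> real" where
  "u0s q = 2 * sqrt q"

definition c0 :: "(real \<Rightarrow> real \<Rightarrow> real) \<Rightarrow> real \<Rightarrow> real \<Rightarrow> real" where
  "c0 f q x = sqrt (2 * integral {..x} (\<lambda>y. f y (u0s q)))"

text \<open>b_0(x) = df/du(x,u_{0s}) + f(x,u_{0s}) / (2 c_0(x)), where fu is the partial derivative in u\<close>
definition b0 :: "(real \<Rightarrow> real \<Rightarrow> real) \<Rightarrow> (real \<Rightarrow> real \<Rightarrow> real) \<Rightarrow> real \<Rightarrow> real \<Rightarrow> real" where
  "b0 f fu q x = fu x (u0s q) + f x (u0s q) / (2 * c0 f q x)"

definition p :: "(real \<Rightarrow> real \<Rightarrow> real) \<Rightarrow> real \<Rightarrow> real \<Rightarrow> real" where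
  "p f q x = integral {x..0} (\<lambda>y. 1 / c0 f q y)"

end

theory Submission imports Defs begin

lemma nm_le:
  fixes z :: complex
  assumes "norm z \<le> 1"
  shows "norm (complex_of_real a * z) \<le> \<bar>a\<bar>"
proof -
  have "norm (complex_of_real a * z) = \<bar>a\<bar> * norm z" by (simp only: norm_mult norm_of_real)
  also have "\<dots> \<le> \<bar>a\<bar>" using assms by (simp add: mult_left_le)
  finally show ?thesis .
qed

lemma abs_int_sub:
  fixes f :: "real \<Rightarrow> 'b::euclidean_space"
  assumes "f absolutely_integrable_on {..0}" "B \<in> sets lebesgue" "B \<subseteq> {..0}"
  shows "f absolutely_integrable_on B"
  using set_integrable_subset[OF assms] .

lemma split_int:
  fixes f :: "real \<Rightarrow> 'b::euclidean_space"
  assumes f: "f absolutely_integrable_on {..0}" and ax: "a \<le> x" "x \<le> 0"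
  shows "integral {..x} f = integral {..a} f + integral {a..x} f"
proof -
  have i1: "f integrable_on {..a}"
    using abs_int_sub[OF f, of "{..a}"] ax set_lebesgue_integral_eq_integral(1) by auto
  have i2: "f integrable_on {a..x}"
    using abs_int_sub[OF f, of "{a..x}"] ax set_lebesgue_integral_eq_integral(1) by auto
  have "(f has_integral (integral {..a} f + integral {a..x} f)) ({..a} \<union> {a..x})"
    by (rule has_integral_Un[OF integrable_integral[OF i1] integrable_integral[OF i2]])
       (use ax in \<open>auto intro: negligible_subset[of "{a}"]\<close>)
  moreover have "{..a} \<union> {a..x} = {..x}" using ax by auto
  ultimately show ?thesis by (simp add: integral_unique)
qed

lemma tail_small:
  fixes h :: "real \<Rightarrow> real"
  assumes h: "h absolutely_integrable_on {..0}" and e: "e > 0"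
  shows "\<exists>T\<ge>1. integral {..-T} (\<lambda>x. norm (h x)) < e"
proof -
  define g where "g = (\<lambda>x. norm (h x))"
  have gi: "g integrable_on {..0}" using h unfolding absolutely_integrable_on_def g_def by auto
  define F where "F = (\<lambda>k::nat. \<lambda>x. if x \<in> {..-real k} then g x else 0)"
  have gk: "g integrable_on {..-real k}" for k
  proof -
    have "h absolutely_integrable_on {..-real k}" by (rule abs_int_sub[OF h]) auto
    thus ?thesis unfolding absolutely_integrable_on_def g_def by auto
  qed
  have Fk: "integral {..0} (F k) = integral {..-real k} g" for k
    unfolding F_def integral_restrict_Int by (rule arg_cong2[where f=integral]) auto
  have Fi: "F k integrable_on {..0}" for k
  proof -
    have "{..-real k} \<inter> {..0} = {..-real k}" by auto
    thus ?thesis using gk[of k] unfolding F_def integrable_on_def has_integral_restrict_Int by auto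
  qed
  have conv: "(\<lambda>k. F k x) \<longlonglongrightarrow> 0" for x
  proof -
    obtain N::nat where "real N > -x" using reals_Archimedean2 by blast
    hence "eventually (\<lambda>k. F k x = 0) sequentially" unfolding F_def eventually_sequentially
      by (intro exI[of _ N]) auto
    thus ?thesis by (rule tendsto_eventually)
  qed
  have "(\<lambda>k. integral {..0} (F k)) \<longlonglongrightarrow> integral {..0} (\<lambda>x. 0::real)"
    using dominated_convergence(2)[of F "{..0}" g "\<lambda>x. 0"] Fi gi conv
    by (simp add: F_def g_def)
  hence lim: "(\<lambda>k. integral {..-real k} g) \<longlonglongrightarrow> 0" using Fk by simp
  obtain N where N: "\<forall>k\<ge>N. norm (integral {..-real k} g - 0) < e"
    using LIMSEQ_iff[THEN iffD1, OF lim] e by blast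
  have "integral {..-real (max N 1)} g < e" using N[rule_format, of "max N 1"] by auto
  thus ?thesis unfolding g_def by (intro exI[of _ "real (max N 1)"]) auto
qed

theorem theorem3:
  fixes f fu :: "real \<Rightarrow> real \<Rightarrow> real" and q :: real
  assumes q_pos: "q > 0"
    and f_nonneg: "\<And>x u. x \<le> 0 \<Longrightarrow> u > 0 \<Longrightarrow> f x u \<ge> 0"
    and f_cont: "\<And>u. u > 0 \<Longrightarrow> continuous_on {..0} (\<lambda>x. f x u)"
    and f_int: "\<And>u. u > 0 \<Longrightarrow> (\<lambda>x. f x u) integrable_on {..0}"
    and f_deriv: "\<And>x u. x \<le> 0 \<Longrightarrow> u > 0 \<Longrightarrow> ((\<lambda>v. f x v) has_real_derivative fu x u) (at u)"
    and fu_cont: "\<And>u. u > 0 \<Longrightarrow> continuous_on {..0} (\<lambda>x. fu x u)"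
    and f_mass: "\<And>u. u > 0 \<Longrightarrow> integral {..0} (\<lambda>x. f x u) = q / 2"
    and c0_pos: "\<And>x. x \<le> 0 \<Longrightarrow> c0 f q x > 0"
    and b0_L1: "b0 f fu q absolutely_integrable_on {..0}"
    and b0c0_bdd: "\<exists>M. \<forall>x\<le>0. \<bar>b0 f fu q x * c0 f q x\<bar> \<le> M"
  shows "\<exists>\<Lambda>>0. \<forall>\<sigma>::complex. Re \<sigma> > 0 \<and>
           integral {..0} (\<lambda>\<xi>. complex_of_real (b0 f fu q \<xi>) * exp (- \<sigma> * complex_of_real (p f q \<xi>)))
             = complex_of_real (c0 f q 0)
           \<longrightarrow> \<bar>Im \<sigma>\<bar> < \<Lambda>"
proof -
  define g where "g = (\<lambda>y. f y (u0s q))"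
  define C where "C = c0 f q"
  define B where "B = b0 f fu q"
  define P where "P = p f q"
  have u0: "u0s q > 0" using q_pos by (simp add: u0s_def)
  have g_cont: "continuous_on {..0} g" unfolding g_def using f_cont[OF u0] .
  have g_nn: "\<And>x. x \<in> {..0} \<Longrightarrow> 0 \<le> g x" unfolding g_def using f_nonneg u0 by auto
  have g_abs: "g absolutely_integrable_on {..0}"
  proof -
    have "g integrable_on {..0}" using f_int[OF u0] unfolding g_def .
    then show ?thesis by (rule nonnegative_absolutely_integrable_1) (rule g_nn)
  qed
  have Cdef: "C x = sqrt (2 * integral {..x} g)" for x unfolding C_def c0_def g_def ..
  have Cpos: "\<And>x. x \<le> 0 \<Longrightarrow> C x > 0" using c0_pos C_def by auto
  define \<epsilon> where "\<epsilon> = C 0 / 3"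
  have eps: "\<epsilon> > 0" using Cpos[of 0] by (simp add: \<epsilon>_def)
  have Babs: "B absolutely_integrable_on {..0}" using b0_L1 B_def by simp
  obtain T where T1: "T \<ge> 1" and tail: "integral {..-T} (\<lambda>x. norm (B x)) < \<epsilon>"
    using tail_small[OF Babs eps] by auto
  define S where "S = {-T..0}"
  have SsubS: "S \<subseteq> {..0}" using T1 by (auto simp: S_def)
  have Scomp: "compact S" "S \<noteq> {}" using T1 by (auto simp: S_def)
  have CnzS: "\<forall>x\<in>S. C x \<noteq> 0" using Cpos SsubS by (metis atMost_iff less_irrefl subsetD)
  have Cform: "C x = sqrt (2 * (integral {..-T} g + integral {-T..x} g))" if "x \<in> S" for x
    using split_int[OF g_abs, of "-T" x] that by (simp add: S_def Cdef)
  have gS: "continuous_on S g" using continuous_on_subset[OF g_cont SsubS] .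
  have gint: "g integrable_on {-T..0}" using integrable_continuous_interval gS S_def by blast
  have Ccont: "continuous_on S C"
  proof -
    have "continuous_on {-T..0} (\<lambda>x. sqrt (2 * (integral {..-T} g + integral {-T..x} g)))"
      by (intro continuous_intros indefinite_integral_continuous_1 gint)
    then show ?thesis unfolding S_def
      by (rule continuous_on_eq) (use Cform in \<open>auto simp: S_def\<close>)
  qed
  obtain xm where xm: "xm \<in> S" "\<forall>y\<in>S. C xm \<le> C y"
    using continuous_attains_inf[OF Scomp Ccont] by auto
  define m where "m = C xm"
  have m: "m > 0" "\<And>y. y \<in> S \<Longrightarrow> m \<le> C y" using xm Cpos SsubS m_def by auto
  define r where "r = (\<lambda>x. 1 / C x)"
  have rcont: "continuous_on S r" unfolding r_def using Ccont Cpos SsubS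
    by (intro continuous_intros) (use CnzS in auto)
  have rint: "r integrable_on {-T..0}" using integrable_continuous_interval rcont S_def by blast
  have Pform: "P x = integral {-T..0} r - integral {-T..x} r" if "x \<in> S" for x
  proof -
    have "integral {-T..x} r + integral {x..0} r = integral {-T..0} r"
      using Henstock_Kurzweil_Integration.integral_combine[OF _ _ rint, of x] that by (auto simp: S_def)
    thus ?thesis by (simp add: P_def p_def r_def C_def)
  qed
  have Pder: "(P has_vector_derivative (- r x)) (at x within S)" if "x \<in> S" for x
  proof -
    have d: "((\<lambda>u. integral {-T..u} r) has_vector_derivative r x) (at x within {-T..0})"
      using integral_has_vector_derivative[of "-T" 0 r x] rcont that S_def by auto
    then have d': "((\<lambda>u. integral {-T..u} r) has_vector_derivative r x) (at x within S)" by (simp add: S_def)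
    have "((\<lambda>u. integral {-T..0} r - integral {-T..u} r) has_vector_derivative (- r x)) (at x within S)"
      using has_vector_derivative_diff[OF has_vector_derivative_const d'] by simp
    then show ?thesis
      by (rule has_vector_derivative_transform[rotated 2]) (use Pform that in auto)
  qed
  have Pnn: "P x \<ge> 0" if "x \<le> 0" for x
  proof (cases "(\<lambda>y. 1 / C y) integrable_on {x..0}")
    case True
    thus ?thesis unfolding P_def p_def C_def[symmetric]
      by (rule integral_nonneg) (use Cpos in \<open>auto intro: less_imp_le\<close>)
  next
    case False
    thus ?thesis by (simp add: P_def p_def C_def[symmetric] not_integrable_integral)
  qed
  define \<phi> where "\<phi> = (\<lambda>x. B x * C x)"
  have Beq: "B x = fu x (u0s q) + g x / (2 * C x)" for x by (simp add: B_def b0_def g_def C_def)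
  have Bcont: "continuous_on S B"
  proof -
    have "continuous_on S (\<lambda>x. fu x (u0s q) + g x / (2 * C x))"
      using continuous_on_subset[OF fu_cont[OF u0] SsubS] gS Ccont Cpos SsubS
      by (intro continuous_intros) (use CnzS in auto)
    thus ?thesis by (rule continuous_on_eq) (simp add: Beq)
  qed
  have phicont: "continuous_on S \<phi>" unfolding \<phi>_def using Bcont Ccont by (intro continuous_intros)
  define \<eta> where "\<eta> = \<epsilon> * m / (T + 1)"
  have eta: "\<eta> > 0" using eps m T1 by (simp add: \<eta>_def)
  obtain Q where Qp: "polynomial_function Q" and Qa: "\<forall>x\<in>S. norm (\<phi> x - Q x) < \<eta>"
    using Stone_Weierstrass_polynomial_function[OF Scomp(1) phicont eta] by blast
  obtain Q' where Q'p: "polynomial_function Q'" and Qd: "\<And>x. (Q has_vector_derivative Q' x) (at x)"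
    using has_vector_derivative_polynomial_function[OF Qp] by blast
  have Qcont: "continuous_on S Q" "continuous_on S Q'"
    using continuous_on_polymonial_function Qp Q'p by blast+
  obtain xM where xM: "xM \<in> S" "\<forall>y\<in>S. \<bar>Q' y\<bar> \<le> \<bar>Q' xM\<bar>"
    using continuous_attains_sup[OF Scomp continuous_on_rabs[OF Qcont(2)]] by blast
  define K1 where "K1 = \<bar>Q' xM\<bar>"
  have K1: "\<And>x. x \<in> S \<Longrightarrow> \<bar>Q' x\<bar> \<le> K1" "K1 \<ge> 0" using xM K1_def by auto
  define K where "K = \<bar>Q 0\<bar> + \<bar>Q (-T)\<bar> + K1 * T"
  have Kn: "K \<ge> 0" using K1 T1 by (simp add: K_def)
  show ?thesis
  proof (intro exI[of _ "K / \<epsilon> + 1"] conjI allI impI)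
    show "K / \<epsilon> + 1 > 0" using Kn eps by (simp add: add_nonneg_pos)
    fix \<sigma> :: complex
    assume H: "Re \<sigma> > 0 \<and> integral {..0} (\<lambda>\<xi>. complex_of_real (b0 f fu q \<xi>) * exp (- \<sigma> * complex_of_real (p f q \<xi>)))
             = complex_of_real (c0 f q 0)"
    show "\<bar>Im \<sigma>\<bar> < K / \<epsilon> + 1"
    proof (rule ccontr)
      assume "\<not> \<bar>Im \<sigma>\<bar> < K / \<epsilon> + 1"
      hence big: "\<bar>Im \<sigma>\<bar> \<ge> K / \<epsilon> + 1" by simp
      define e where "e = (\<lambda>\<xi>. exp (- \<sigma> * complex_of_real (P \<xi>)))"
      define Hf where "Hf = (\<lambda>\<xi>. complex_of_real (B \<xi>) * e \<xi>)"
      have Ieq: "integral {..0} Hf = complex_of_real (C 0)"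
        using H by (simp add: Hf_def e_def B_def P_def C_def)
      have enorm: "norm (e x) \<le> 1" if "x \<le> 0" for x
      proof -
        have "0 \<le> Re \<sigma> * P x" using H Pnn[OF that] by simp
        thus ?thesis by (simp add: e_def)
      qed
      have Hint: "Hf integrable_on {..0}"
      proof (rule ccontr)
        assume "\<not> Hf integrable_on {..0}"
        then have "integral {..0} Hf = 0" by (simp add: not_integrable_integral)
        with Ieq Cpos[of 0] show False by simp
      qed
      have Hnorm: "norm (Hf x) \<le> norm (B x)" if "x \<le> 0" for x
      proof -
        have "norm (Hf x) = \<bar>B x\<bar> * norm (e x)" by (simp add: Hf_def norm_mult)
        also have "\<dots> \<le> \<bar>B x\<bar>" using enorm[OF that] by (simp add: mult_left_le)
        finally show ?thesis by simp
      qed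
      have Habs: "Hf absolutely_integrable_on {..0}"
        by (rule absolutely_integrable_integrable_bound[OF _ Hint, of "\<lambda>x. norm (B x)"])
           (use Hnorm Babs in \<open>auto simp: absolutely_integrable_on_def\<close>)
      have splitH: "integral {..0} Hf = integral {..-T} Hf + integral {-T..0} Hf"
        using split_int[OF Habs, of "-T" 0] T1 by simp
      have tailb: "norm (integral {..-T} Hf) < \<epsilon>"
      proof -
        have a: "Hf absolutely_integrable_on {..-T}" by (rule abs_int_sub[OF Habs]) (use T1 in auto)
        have b: "B absolutely_integrable_on {..-T}" by (rule abs_int_sub[OF Babs]) (use T1 in auto)
        have "norm (integral {..-T} Hf) \<le> integral {..-T} (\<lambda>x. norm (B x))"
          by (rule integral_norm_bound_integral) (use a b Hnorm T1 in \<open>auto simp: absolutely_integrable_on_def\<close>)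
        with tail show ?thesis by simp
      qed
      have eS: "norm (e x) \<le> 1" if "x \<in> S" for x using enorm that SsubS by auto
      have eder: "(e has_vector_derivative (\<sigma> * complex_of_real (r x) * e x)) (at x within S)" if "x \<in> S" for x
      proof -
        have d1: "((\<lambda>x. complex_of_real (P x)) has_vector_derivative complex_of_real (- r x)) (at x within S)"
          using Pder[OF that] by (intro has_vector_derivative_of_real) (simp add: has_real_derivative_iff_has_vector_derivative)
        have d2: "((\<lambda>z. exp (- \<sigma> * z)) has_field_derivative (- \<sigma> * exp (- \<sigma> * complex_of_real (P x))))
                    (at (complex_of_real (P x)) within (\<lambda>x. complex_of_real (P x)) ` S)"
          by (auto intro!: derivative_eq_intros)
        have "((\<lambda>z. exp (- \<sigma> * z)) \<circ> (\<lambda>x. complex_of_real (P x)) has_vector_derivative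
                (complex_of_real (- r x) * (- \<sigma> * exp (- \<sigma> * complex_of_real (P x))))) (at x within S)"
          by (rule field_vector_diff_chain_within[OF d1 d2])
        moreover have ceq: "(\<lambda>z. exp (- \<sigma> * z)) \<circ> (\<lambda>x. complex_of_real (P x)) = e"
          by (simp add: e_def o_def)
        moreover have deq: "complex_of_real (- r x) * (- \<sigma> * exp (- \<sigma> * complex_of_real (P x)))
                 = \<sigma> * complex_of_real (r x) * e x" by (simp add: e_def)
        ultimately show ?thesis by (simp only:)
      qed
      have econt: "continuous_on S e" by (rule continuous_on_vector_derivative) (rule eder)
      define G where "G = (\<lambda>x. complex_of_real (Q x) * e x)"
      have Gder: "(G has_vector_derivative (complex_of_real (Q x) * (\<sigma> * complex_of_real (r x) * e x)
                     + complex_of_real (Q' x) * e x)) (at x within S)" if "x \<in> S" for x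
      proof -
        have qd: "((\<lambda>x. complex_of_real (Q x)) has_vector_derivative complex_of_real (Q' x)) (at x within S)"
          using has_vector_derivative_at_within[OF Qd[of x], of S]
          by (intro has_vector_derivative_of_real) (simp add: has_real_derivative_iff_has_vector_derivative)
        show ?thesis unfolding G_def by (rule has_vector_derivative_mult[OF qd eder[OF that]])
      qed
      have FTC: "((\<lambda>x. complex_of_real (Q x) * (\<sigma> * complex_of_real (r x) * e x)
                     + complex_of_real (Q' x) * e x) has_integral (G 0 - G (-T))) S"
        unfolding S_def by (rule fundamental_theorem_of_calculus) (use T1 Gder in \<open>auto simp: S_def\<close>)
      define J1 where "J1 = integral S (\<lambda>x. complex_of_real (B x - Q x / C x) * e x)"
      define J2 where "J2 = integral S (\<lambda>x. complex_of_real (Q x / C x) * e x)"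
      define J3 where "J3 = integral S (\<lambda>x. complex_of_real (Q' x) * e x)"
      have i1: "(\<lambda>x. complex_of_real (B x - Q x / C x) * e x) integrable_on S"
        unfolding S_def by (rule integrable_continuous_interval)
          (use Bcont Qcont Ccont econt CnzS in \<open>auto simp: S_def intro!: continuous_intros\<close>)
      have i2: "(\<lambda>x. complex_of_real (Q x / C x) * e x) integrable_on S"
        unfolding S_def by (rule integrable_continuous_interval)
          (use Bcont Qcont Ccont econt CnzS in \<open>auto simp: S_def intro!: continuous_intros\<close>)
      have i3: "(\<lambda>x. complex_of_real (Q' x) * e x) integrable_on S"
        unfolding S_def by (rule integrable_continuous_interval)
          (use Bcont Qcont Ccont econt CnzS in \<open>auto simp: S_def intro!: continuous_intros\<close>)
      have sumeq: "integral S Hf = J1 + J2"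
      proof -
        have "integral S Hf = integral S (\<lambda>x. complex_of_real (B x - Q x / C x) * e x + complex_of_real (Q x / C x) * e x)"
          by (rule integral_cong) (simp add: Hf_def ring_distribs)
        also have "\<dots> = J1 + J2" unfolding J1_def J2_def by (rule integral_add[OF i1 i2])
        finally show ?thesis .
      qed
      have J1b: "norm J1 \<le> \<epsilon> * T / (T + 1)"
      proof -
        have pt: "norm (complex_of_real (B x - Q x / C x) * e x) \<le> \<eta> / m" if "x \<in> S" for x
        proof -
          have Cx: "C x > 0" using Cpos that SsubS by auto
          have "B x - Q x / C x = (\<phi> x - Q x) / C x" using Cx by (simp add: \<phi>_def field_simps)
          hence "\<bar>B x - Q x / C x\<bar> = \<bar>\<phi> x - Q x\<bar> / C x" using Cx by simp
          also have "\<dots> \<le> \<eta> / m"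
            using Qa that m Cx by (intro frac_le) (auto intro: less_imp_le)
          finally have "\<bar>B x - Q x / C x\<bar> \<le> \<eta> / m" .
          moreover have "norm (complex_of_real (B x - Q x / C x) * e x) \<le> \<bar>B x - Q x / C x\<bar>"
            using eS[OF that] by (rule nm_le)
          ultimately show ?thesis by linarith
        qed
        have "norm J1 \<le> integral S (\<lambda>x. \<eta> / m)" unfolding J1_def
          by (rule integral_norm_bound_integral[OF i1]) (use pt in \<open>auto simp: S_def\<close>)
        also have "\<dots> = T * (\<eta> / m)" using T1 by (simp add: S_def)
        also have "\<dots> = \<epsilon> * T / (T + 1)"
        proof -
          have "\<eta> / m = \<epsilon> / (T + 1)" unfolding \<eta>_def using m(1) T1 by (simp add: divide_simps)
          thus ?thesis by simp
        qed
        finally show ?thesis .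
      qed
      have J1lt: "norm J1 < \<epsilon>"
      proof -
        have "\<epsilon> * T / (T + 1) < \<epsilon>" using eps T1 by (simp add: field_simps)
        with J1b show ?thesis by linarith
      qed
      have J2eq: "\<sigma> * J2 + J3 = G 0 - G (-T)"
      proof -
        have "integral S (\<lambda>x. complex_of_real (Q x) * (\<sigma> * complex_of_real (r x) * e x)
                     + complex_of_real (Q' x) * e x) = G 0 - G (-T)"
          using FTC by (rule integral_unique)
        moreover have "integral S (\<lambda>x. complex_of_real (Q x) * (\<sigma> * complex_of_real (r x) * e x)
                     + complex_of_real (Q' x) * e x)
              = integral S (\<lambda>x. \<sigma> * (complex_of_real (Q x / C x) * e x) + complex_of_real (Q' x) * e x)"
          by (rule integral_cong) (simp add: r_def)
        moreover have "integral S (\<lambda>x. \<sigma> * (complex_of_real (Q x / C x) * e x) + complex_of_real (Q' x) * e x)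
              = \<sigma> * J2 + J3"
          unfolding J2_def J3_def
          using integral_add[OF integrable_on_mult_right[OF i2, of \<sigma>] i3] by (simp only: integral_mult_right)
        ultimately show ?thesis by simp
      qed
      have J3b: "norm J3 \<le> K1 * T"
      proof -
        have "norm J3 \<le> integral S (\<lambda>x. K1)" unfolding J3_def
        proof (rule integral_norm_bound_integral[OF i3])
          show "(\<lambda>x. K1) integrable_on S" unfolding S_def
            by (rule integrable_continuous_interval) (rule continuous_on_const)
          fix x assume x: "x \<in> S"
          have "norm (complex_of_real (Q' x) * e x) \<le> \<bar>Q' x\<bar>"
            using eS[OF x] by (rule nm_le)
          with K1(1)[OF x] show "norm (complex_of_real (Q' x) * e x) \<le> K1" by linarith
        qed
        also have "\<dots> = K1 * T" using T1 by (simp add: S_def)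
        finally show ?thesis .
      qed
      have G0: "norm (G 0) \<le> \<bar>Q 0\<bar>" using eS[of 0] T1 by (simp add: G_def norm_mult S_def mult_left_le)
      have GT: "norm (G (-T)) \<le> \<bar>Q (-T)\<bar>" using eS[of "-T"] T1 by (simp add: G_def norm_mult S_def mult_left_le)
      have sJ2: "norm \<sigma> * norm J2 \<le> K"
      proof -
        have "\<sigma> * J2 = G 0 - G (-T) - J3" using J2eq by (simp add: algebra_simps)
        hence "norm (\<sigma> * J2) = norm (G 0 - G (-T) - J3)" by simp
        also have "\<dots> \<le> norm (G 0 - G (-T)) + norm J3" by (rule norm_triangle_ineq4)
        also have "\<dots> \<le> norm (G 0) + norm (G (-T)) + norm J3"
          using norm_triangle_ineq4[of "G 0" "G (-T)"] by simp
        finally have "norm (\<sigma> * J2) \<le> norm (G 0) + norm (G (-T)) + norm J3" .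
        thus ?thesis using G0 GT J3b by (simp add: K_def norm_mult)
      qed
      have J2lt: "norm J2 < \<epsilon>"
      proof (rule ccontr)
        assume "\<not> norm J2 < \<epsilon>"
        hence n2: "norm J2 \<ge> \<epsilon>" by simp
        have s: "norm \<sigma> \<ge> K / \<epsilon> + 1" using big abs_Im_le_cmod[of \<sigma>] by linarith
        have "(K / \<epsilon> + 1) * \<epsilon> \<le> norm \<sigma> * norm J2"
          using s n2 eps Kn by (intro mult_mono) auto
        also have "(K / \<epsilon> + 1) * \<epsilon> = K + \<epsilon>" using eps by (simp add: field_simps)
        finally show False using sJ2 eps by linarith
      qed
      have "C 0 = norm (integral {..0} Hf)" using Ieq Cpos[of 0] by simp
      also have "\<dots> = norm (integral {..-T} Hf + (J1 + J2))" using splitH sumeq S_def by simp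
      also have "\<dots> \<le> norm (integral {..-T} Hf) + norm (J1 + J2)" by (rule norm_triangle_ineq)
      also have "\<dots> \<le> norm (integral {..-T} Hf) + norm J1 + norm J2"
        using norm_triangle_ineq[of J1 J2] by simp
      also have "\<dots> < 3 * \<epsilon>" using tailb J1lt J2lt by linarith
      finally show False by (simp add: \<epsilon>_def)
    qed
  qed
qed

end
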